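(* Let $V$ be an infinite-dimensional left vector space over a field $K$. Then there exists an automorphism of the Grassmann graph on $\mathcal G$ (a bijection $\phi:\mathcal G\to\mathcal G$ with $X\sim Y\iff X^\phi\sim Y^\phi$) which is not an automorphism of the distant graph on $\mathcal G$; more precisely, there exist $P,Q\in\mathcal G$ with $P\oplus Q=V$ but $P^\phi\oplus Q^\phi\neq V$.
   Context: Fields are not necessarily commutative (division rings). $\mathcal G$ denotes the set of all subspaces $X\le V$ such that $X$ is isomorphic to $V/X$. Two elements $X,Y\in\mathcal G$ are distant if $X\oplus Y=V$, and adjacent ($X\sim Y$) if $\dim((X+Y)/X)=\dim((X+Y)/Y)=1$. The Grassmann graph (resp. distant graph) on $\mathcal G$ has vertex set $\mathcal G$ and edges the pairs of adjacent (resp. distant) elements. *)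

theory Defs
  imports Main
begin

text \<open>Left vector spaces over a (not necessarily commutative) division ring.
  The vector space V is the whole carrier type 'v, with scalar multiplication sm.\<close>

definition lvs :: "('k::division_ring \<Rightarrow> 'v::ab_group_add \<Rightarrow> 'v) \<Rightarrow> bool" where
  "lvs sm \<longleftrightarrow>
     (\<forall>a x y. sm a (x + y) = sm a x + sm a y) \<and>
     (\<forall>a b x. sm (a + b) x = sm a x + sm b x) \<and>
     (\<forall>a b x. sm (a * b) x = sm a (sm b x)) \<and>
     (\<forall>x. sm 1 x = x)"

definition lvs_subspace :: "('k::division_ring \<Rightarrow> 'v::ab_group_add \<Rightarrow> 'v) \<Rightarrow> 'v set \<Rightarrow> bool" where
  "lvs_subspace sm X \<longleftrightarrow> 0 \<in> X \<and> (\<forall>x\<in>X. \<forall>y\<in>X. x + y \<in> X) \<and> (\<forall>a. \<forall>x\<in>X. sm a x \<in> X)"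

definition lvs_span :: "('k::division_ring \<Rightarrow> 'v::ab_group_add \<Rightarrow> 'v) \<Rightarrow> 'v set \<Rightarrow> 'v set" where
  "lvs_span sm S = \<Inter> {W. lvs_subspace sm W \<and> S \<subseteq> W}"

definition lvs_fin_dim :: "('k::division_ring \<Rightarrow> 'v::ab_group_add \<Rightarrow> 'v) \<Rightarrow> bool" where
  "lvs_fin_dim sm \<longleftrightarrow> (\<exists>S. finite S \<and> lvs_span sm S = UNIV)"

definition set_sum :: "'v::ab_group_add set \<Rightarrow> 'v set \<Rightarrow> 'v set" where
  "set_sum X Y = {x + y | x y. x \<in> X \<and> y \<in> Y}"

text \<open>The coset x + X, i.e. an element of the quotient space V/X.\<close>
definition coset :: "'v::ab_group_add \<Rightarrow> 'v set \<Rightarrow> 'v set" where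
  "coset x X = {x + y | y. y \<in> X}"

text \<open>X is isomorphic to the quotient space V/X: there is a linear bijection
  from X onto the set of cosets of X (with the quotient-space operations).\<close>
definition iso_quot :: "('k::division_ring \<Rightarrow> 'v::ab_group_add \<Rightarrow> 'v) \<Rightarrow> 'v set \<Rightarrow> bool" where
  "iso_quot sm X \<longleftrightarrow> (\<exists>g. bij_betw g X (range (\<lambda>v. coset v X)) \<and>
      (\<forall>a\<in>X. \<forall>b\<in>X. \<forall>x y. g a = coset x X \<and> g b = coset y X \<longrightarrow> g (a + b) = coset (x + y) X) \<and>
      (\<forall>c. \<forall>a\<in>X. \<forall>x. g a = coset x X \<longrightarrow> g (sm c a) = coset (sm c x) X))"

definition calG :: "('k::division_ring \<Rightarrow> 'v::ab_group_add \<Rightarrow> 'v) \<Rightarrow> 'v set set" where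
  "calG sm = {X. lvs_subspace sm X \<and> iso_quot sm X}"

text \<open>For subspaces X \<subseteq> W: the quotient W/X is one-dimensional, i.e. spanned by a
  single nonzero element v + X.\<close>
definition quot_dim_one :: "('k::division_ring \<Rightarrow> 'v::ab_group_add \<Rightarrow> 'v) \<Rightarrow> 'v set \<Rightarrow> 'v set \<Rightarrow> bool" where
  "quot_dim_one sm W X \<longleftrightarrow> X \<subseteq> W \<and>
     (\<exists>v\<in>W. v \<notin> X \<and> (\<forall>w\<in>W. \<exists>c. w - sm c v \<in> X))"

definition distant :: "'v::ab_group_add set \<Rightarrow> 'v set \<Rightarrow> bool" where
  "distant X Y \<longleftrightarrow> X \<inter> Y = {0} \<and> set_sum X Y = UNIV"

definition adjacent :: "('k::division_ring \<Rightarrow> 'v::ab_group_add \<Rightarrow> 'v) \<Rightarrow> 'v set \<Rightarrow> 'v set \<Rightarrow> bool" where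
  "adjacent sm X Y \<longleftrightarrow> quot_dim_one sm (set_sum X Y) X \<and> quot_dim_one sm (set_sum X Y) Y"

end

theory Submission
  imports Defs
begin

unbundle cardinal_syntax


locale lv =
  fixes sm :: "'k::division_ring \<Rightarrow> 'v::ab_group_add \<Rightarrow> 'v"
  assumes lvs: "lvs sm"
begin

lemma sm_add: "sm a (x+y) = sm a x + sm a y" using lvs unfolding lvs_def by blast
lemma sm_add2: "sm (a+b) x = sm a x + sm b x" using lvs unfolding lvs_def by blast
lemma sm_mult: "sm (a*b) x = sm a (sm b x)" using lvs unfolding lvs_def by blast
lemma sm_one[simp]: "sm 1 x = x" using lvs unfolding lvs_def by blast

lemma sm_zero[simp]: "sm 0 x = 0"
  using sm_add2[of 0 0 x] by simp
lemma sm_zero2[simp]: "sm a 0 = 0"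
  using sm_add[of a 0 0] by simp
lemma sm_neg: "sm a (-x) = - sm a x"
  using sm_add[of a x "-x"] by (metis add.right_inverse neg_eq_iff_add_eq_0 sm_zero2)
lemma sm_diff: "sm a (x - y) = sm a x - sm a y"
  using sm_add[of a x "-y"] sm_neg by simp
lemma sm_neg2: "sm (-a) x = - sm a x"
  using sm_add2[of a "-a" x] by (metis add.right_inverse neg_eq_iff_add_eq_0 sm_zero)
lemma sm_diff2: "sm (a - b) x = sm a x - sm b x"
  using sm_add2[of a "-b" x] sm_neg2 by simp

lemma sm_sum: "sm a (sum g T) = (\<Sum>x\<in>T. sm a (g x))"
  by (induction T rule: infinite_finite_induct) (auto simp: sm_add)

lemma sub_zero: "lvs_subspace sm X \<Longrightarrow> 0 \<in> X" unfolding lvs_subspace_def by blast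
lemma sub_add: "lvs_subspace sm X \<Longrightarrow> x \<in> X \<Longrightarrow> y \<in> X \<Longrightarrow> x + y \<in> X"
  unfolding lvs_subspace_def by blast
lemma sub_sm: "lvs_subspace sm X \<Longrightarrow> x \<in> X \<Longrightarrow> sm a x \<in> X"
  unfolding lvs_subspace_def by blast
lemma sub_neg: "lvs_subspace sm X \<Longrightarrow> x \<in> X \<Longrightarrow> - x \<in> X"
  using sub_sm[of X x "-1"] sm_neg2[of 1 x] by simp
lemma sub_diff: "lvs_subspace sm X \<Longrightarrow> x \<in> X \<Longrightarrow> y \<in> X \<Longrightarrow> x - y \<in> X"
  using sub_add[of X x "-y"] sub_neg by simp
lemma sub_sum: "lvs_subspace sm X \<Longrightarrow> (\<And>x. x \<in> T \<Longrightarrow> g x \<in> X) \<Longrightarrow> sum g T \<in> X"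
  by (induction T rule: infinite_finite_induct) (auto simp: sub_zero sub_add)

lemma span_subspace: "lvs_subspace sm (lvs_span sm S)"
  unfolding lvs_span_def lvs_subspace_def by auto
lemma span_sup: "S \<subseteq> lvs_span sm S"
  unfolding lvs_span_def by auto
lemma span_least: "lvs_subspace sm W \<Longrightarrow> S \<subseteq> W \<Longrightarrow> lvs_span sm S \<subseteq> W"
  unfolding lvs_span_def by auto

definition supp :: "('v \<Rightarrow> 'k) \<Rightarrow> 'v set" where "supp c = {b. c b \<noteq> 0}"
definition lc :: "('v \<Rightarrow> 'k) \<Rightarrow> 'v" where "lc c = (\<Sum>b\<in>supp c. sm (c b) b)"
definition fs :: "'v set \<Rightarrow> ('v \<Rightarrow> 'k) \<Rightarrow> bool" where "fs S c \<longleftrightarrow> finite (supp c) \<and> supp c \<subseteq> S"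

lemma supp_add: "supp (\<lambda>b. c b + d b) \<subseteq> supp c \<union> supp d"
  unfolding supp_def by auto
lemma supp_mult: "supp (\<lambda>b. a * c b) \<subseteq> supp c"
  unfolding supp_def by auto
lemma fs_add: "fs S c \<Longrightarrow> fs S d \<Longrightarrow> fs S (\<lambda>b. c b + d b)"
  unfolding fs_def using supp_add[of c d] by (meson finite_Un finite_subset le_sup_iff order_trans)
lemma fs_mult: "fs S c \<Longrightarrow> fs S (\<lambda>b. a * c b)"
  unfolding fs_def using supp_mult[of a c] by (meson finite_subset order_trans)

lemma lc_on: "finite T \<Longrightarrow> supp c \<subseteq> T \<Longrightarrow> lc c = (\<Sum>b\<in>T. sm (c b) b)"
  unfolding lc_def by (rule sum.mono_neutral_left) (auto simp: supp_def)

lemma lc_add: "finite (supp c) \<Longrightarrow> finite (supp d) \<Longrightarrow> lc (\<lambda>b. c b + d b) = lc c + lc d"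
proof -
  assume fc: "finite (supp c)" and fd: "finite (supp d)"
  let ?T = "supp c \<union> supp d"
  have "lc (\<lambda>b. c b + d b) = (\<Sum>b\<in>?T. sm (c b + d b) b)"
    using fc fd by (intro lc_on) (auto simp: supp_def)
  also have "\<dots> = (\<Sum>b\<in>?T. sm (c b) b) + (\<Sum>b\<in>?T. sm (d b) b)"
    by (simp add: sm_add2 sum.distrib)
  also have "\<dots> = lc c + lc d"
    using lc_on[of ?T c] lc_on[of ?T d] fc fd by auto
  finally show ?thesis .
qed

lemma lc_smult: "finite (supp c) \<Longrightarrow> lc (\<lambda>b. a * c b) = sm a (lc c)"
proof -
  assume fc: "finite (supp c)"
  have "lc (\<lambda>b. a * c b) = (\<Sum>b\<in>supp c. sm (a * c b) b)"
    using fc by (intro lc_on) (auto simp: supp_def)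
  also have "\<dots> = sm a (lc c)" by (simp add: lc_def sm_sum sm_mult)
  finally show ?thesis .
qed

lemma lc_neg: "lc (\<lambda>b. - c b) = - lc c"
  unfolding lc_def supp_def by (simp add: sm_neg2 sum_negf)

lemma lc_diff: "finite (supp c) \<Longrightarrow> finite (supp d) \<Longrightarrow> lc (\<lambda>b. c b - d b) = lc c - lc d"
  using lc_add[of c "\<lambda>b. - d b"] lc_neg[of d] by (simp add: supp_def)

lemma lc_zero[simp]: "lc (\<lambda>b. 0) = 0" unfolding lc_def supp_def by simp

lemma lc_single: "lc (\<lambda>x. if x = b then 1 else 0) = b"
proof -
  have "supp (\<lambda>x. if x = b then (1::'k) else 0) = {b}" by (auto simp: supp_def)
  then show ?thesis unfolding lc_def by simp
qed

lemma lc_in_span: "fs S c \<Longrightarrow> lc c \<in> lvs_span sm S"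
  unfolding lc_def fs_def
  by (rule sub_sum[OF span_subspace]) (meson in_mono mem_Collect_eq span_sup sub_sm[OF span_subspace] supp_def)

lemma span_lc: "v \<in> lvs_span sm S \<Longrightarrow> \<exists>c. fs S c \<and> lc c = v"
proof -
  assume v: "v \<in> lvs_span sm S"
  let ?W = "{lc c | c. fs S c}"
  have "lvs_subspace sm ?W"
    unfolding lvs_subspace_def
  proof (intro conjI ballI allI)
    show "0 \<in> ?W" by (rule CollectI, rule exI[of _ "\<lambda>_. 0"]) (simp add: fs_def supp_def)
  next
    fix x y assume "x \<in> ?W" "y \<in> ?W"
    then obtain c d where "fs S c" "x = lc c" "fs S d" "y = lc d" by blast
    then show "x + y \<in> ?W"
    proof -
      have "fs S (\<lambda>b. c b + d b)" using fs_add \<open>fs S c\<close> \<open>fs S d\<close> by blast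
      moreover have "lc (\<lambda>b. c b + d b) = x + y"
        using lc_add \<open>fs S c\<close> \<open>fs S d\<close> \<open>x = lc c\<close> \<open>y = lc d\<close> unfolding fs_def by blast
      ultimately show ?thesis by (metis (mono_tags, lifting) CollectI)
    qed
  next
    fix a x assume "x \<in> ?W"
    then obtain c where "fs S c" "x = lc c" by blast
    then show "sm a x \<in> ?W"
    proof -
      have "fs S (\<lambda>b. a * c b)" using fs_mult \<open>fs S c\<close> by blast
      moreover have "lc (\<lambda>b. a * c b) = sm a x"
        using lc_smult \<open>fs S c\<close> \<open>x = lc c\<close> unfolding fs_def by blast
      ultimately show ?thesis by (metis (mono_tags, lifting) CollectI)
    qed
  qed
  moreover have "S \<subseteq> ?W"
  proof
    fix s assume "s \<in> S"
    have "supp (\<lambda>x. if x = s then (1::'k) else 0) = {s}" by (auto simp: supp_def)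
    then show "s \<in> ?W" using lc_single[of s] \<open>s \<in> S\<close>
      by (intro CollectI exI[of _ "\<lambda>x. if x = s then 1 else 0"]) (auto simp: fs_def)
  qed
  ultimately have "lvs_span sm S \<subseteq> ?W" by (rule span_least)
  then show ?thesis using v by blast
qed

definition indep :: "'v set \<Rightarrow> bool" where
  "indep B \<longleftrightarrow> (\<forall>c. fs B c \<and> lc c = 0 \<longrightarrow> (\<forall>b. c b = 0))"

lemma fs_diff: "fs S c \<Longrightarrow> fs S d \<Longrightarrow> fs S (\<lambda>b. c b - d b)"
proof -
  assume "fs S c" "fs S d"
  have "supp (\<lambda>b. c b - d b) \<subseteq> supp c \<union> supp d" unfolding supp_def by auto
  then show ?thesis using \<open>fs S c\<close> \<open>fs S d\<close> unfolding fs_def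
    by (meson finite_Un finite_subset le_sup_iff order_trans)
qed

lemma fs_mono: "fs S c \<Longrightarrow> S \<subseteq> T \<Longrightarrow> fs T c" unfolding fs_def by blast

lemma basis_exists: "\<exists>B. indep B \<and> lvs_span sm B = UNIV"
proof -
  have "\<forall>C\<in>chains {B. indep B}. \<Union>C \<in> {B. indep B}"
  proof
    fix C assume C: "C \<in> chains {B. indep B}"
    then have ch: "subset.chain {B. indep B} C" by (simp add: chains_alt_def)
    then have CA: "C \<subseteq> {B. indep B}" by (simp add: subset.chain_def)
    have "indep (\<Union>C)" unfolding indep_def
    proof (intro allI impI)
      fix c b assume h: "fs (\<Union>C) c \<and> lc c = 0"
      show "c b = 0"
      proof (cases "supp c = {}")
        case True then show ?thesis by (auto simp: supp_def)
      next
        case False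
        then have "C \<noteq> {}" using h unfolding fs_def by auto
        then obtain B where "B \<in> C" "supp c \<subseteq> B"
          using finite_subset_Union_chain[of "supp c" C "{B. indep B}"] h ch unfolding fs_def by blast
        then have "indep B" "fs B c" using CA h unfolding fs_def by auto
        then show ?thesis using h unfolding indep_def by blast
      qed
    qed
    then show "\<Union>C \<in> {B. indep B}" by simp
  qed
  then obtain M where M: "M \<in> {B. indep B}" and Mmax: "\<forall>X\<in>{B. indep B}. M \<subseteq> X \<longrightarrow> X = M"
    using Zorn_Lemma by blast
  have "lvs_span sm M = UNIV"
  proof (rule ccontr)
    assume "lvs_span sm M \<noteq> UNIV"
    then obtain v where v: "v \<notin> lvs_span sm M" by blast
    have "indep (insert v M)" unfolding indep_def
    proof (intro allI impI)
      fix c b assume h: "fs (insert v M) c \<and> lc c = 0"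
      show "c b = 0"
      proof (cases "c v = 0")
        case True
        then have "fs M c" using h unfolding fs_def supp_def by auto
        then show ?thesis using M h unfolding indep_def by blast
      next
        case False
        define d where "d = c(v := 0)"
        have sd: "supp d = supp c - {v}" unfolding d_def supp_def by auto
        have fd: "fs M d" using h sd unfolding fs_def by auto
        have fin: "finite (supp c)" using h unfolding fs_def by blast
        have vs: "v \<in> supp c" using False by (simp add: supp_def)
        have "lc c = sm (c v) v + (\<Sum>b\<in>supp c - {v}. sm (c b) b)"
          unfolding lc_def using sum.remove[OF fin vs] by simp
        also have "(\<Sum>b\<in>supp c - {v}. sm (c b) b) = lc d"
          unfolding lc_def sd by (rule sum.cong) (auto simp: d_def)
        finally have "sm (c v) v = - lc d" using h by (simp add: eq_neg_iff_add_eq_0)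
        then have "sm (inverse (c v)) (sm (c v) v) = sm (inverse (c v)) (- lc d)" by simp
        then have "v = sm (inverse (c v)) (- lc d)" using False by (simp flip: sm_mult)
        moreover have "sm (inverse (c v)) (- lc d) \<in> lvs_span sm M"
          using lc_in_span[OF fd] span_subspace sub_neg sub_sm by blast
        ultimately show ?thesis using v by simp
      qed
    qed
    then have "insert v M = M" using Mmax by blast
    then show False using v span_sup by blast
  qed
  then show ?thesis using M by blast
qed

end




locale lvb = lv sm for sm :: "'k::division_ring \<Rightarrow> 'v::ab_group_add \<Rightarrow> 'v" +
  fixes B :: "'v set"
  assumes indepB: "indep B" and spanB: "lvs_span sm B = UNIV"
begin

definition coord :: "'v \<Rightarrow> 'v \<Rightarrow> 'k" where "coord v = (SOME c. fs B c \<and> lc c = v)"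

lemma coord: "fs B (coord v) \<and> lc (coord v) = v"
proof -
  have "\<exists>c. fs B c \<and> lc c = v" using span_lc[of v B] spanB by simp
  then show ?thesis unfolding coord_def by (rule someI_ex)
qed

lemma rep_unique: "fs B c \<Longrightarrow> fs B d \<Longrightarrow> lc c = lc d \<Longrightarrow> c = d"
proof -
  assume h: "fs B c" "fs B d" "lc c = lc d"
  have "lc (\<lambda>b. c b - d b) = 0" using lc_diff h unfolding fs_def by simp
  then have "\<forall>b. c b - d b = 0" using indepB fs_diff[OF h(1,2)] unfolding indep_def by blast
  then show ?thesis by auto
qed

lemma coord_eq: "fs B c \<Longrightarrow> lc c = v \<Longrightarrow> coord v = c"
proof -
  assume "fs B c" "lc c = v"
  then show ?thesis using rep_unique[of "coord v" c] coord[of v] by simp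
qed

lemma coord_add: "coord (v + w) = (\<lambda>b. coord v b + coord w b)"
proof (rule coord_eq)
  show "fs B (\<lambda>b. coord v b + coord w b)" using coord[of v] coord[of w] fs_add by blast
  show "lc (\<lambda>b. coord v b + coord w b) = v + w"
    using coord[of v] coord[of w] lc_add[of "coord v" "coord w"] unfolding fs_def by simp
qed

lemma coord_diff: "coord (v - w) = (\<lambda>b. coord v b - coord w b)"
proof (rule coord_eq)
  show "fs B (\<lambda>b. coord v b - coord w b)" using coord[of v] coord[of w] fs_diff by blast
  show "lc (\<lambda>b. coord v b - coord w b) = v - w"
    using coord[of v] coord[of w] lc_diff[of "coord v" "coord w"] unfolding fs_def by simp
qed

lemma coord_smult: "coord (sm a v) = (\<lambda>b. a * coord v b)"
proof (rule coord_eq)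
  show "fs B (\<lambda>b. a * coord v b)" using coord[of v] fs_mult by blast
  show "lc (\<lambda>b. a * coord v b) = sm a v"
    using coord[of v] lc_smult[of "coord v" a] unfolding fs_def by simp
qed

lemma coord_zero: "coord 0 = (\<lambda>b. 0)"
  by (intro coord_eq) (auto simp: fs_def supp_def)

lemma coord_basis: "b \<in> B \<Longrightarrow> coord b = (\<lambda>x. if x = b then 1 else 0)"
  by (intro coord_eq) (auto simp: fs_def supp_def lc_single)

lemma in_span_iff: "B' \<subseteq> B \<Longrightarrow> v \<in> lvs_span sm B' \<longleftrightarrow> supp (coord v) \<subseteq> B'"
proof
  assume "B' \<subseteq> B" "v \<in> lvs_span sm B'"
  then obtain c where "fs B' c" "lc c = v" using span_lc by blast
  then have "coord v = c" using coord_eq fs_mono[of B' c B] \<open>B' \<subseteq> B\<close> by blast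
  then show "supp (coord v) \<subseteq> B'" using \<open>fs B' c\<close> by (simp add: fs_def)
next
  assume "supp (coord v) \<subseteq> B'"
  then have "fs B' (coord v)" using coord[of v] by (simp add: fs_def)
  then show "v \<in> lvs_span sm B'" using lc_in_span[of B' "coord v"] coord[of v] by simp
qed

lemma basis_nz: "b \<in> B \<Longrightarrow> b \<noteq> 0"
proof
  assume "b \<in> B" "b = 0"
  then have "(\<lambda>x. if x = b then (1::'k) else 0) = (\<lambda>x. 0)" using coord_basis[of b] coord_zero by simp
  then have "(1::'k) = 0" by (metis (full_types))
  then show False by simp
qed

end



context lv
begin

definition linv :: "('v \<Rightarrow> 'v) \<Rightarrow> bool" where
  "linv f \<longleftrightarrow> (\<forall>x y. f (x+y) = f x + f y) \<and> (\<forall>a x. f (sm a x) = sm a (f x)) \<and> (\<forall>x. f (f x) = x)"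

lemma li_add: "linv f \<Longrightarrow> f (x+y) = f x + f y" unfolding linv_def by blast
lemma li_sm: "linv f \<Longrightarrow> f (sm a x) = sm a (f x)" unfolding linv_def by blast
lemma li_inv: "linv f \<Longrightarrow> f (f x) = x" unfolding linv_def by blast
lemma li_zero: "linv f \<Longrightarrow> f 0 = 0" using li_add[of f 0 0] by simp
lemma li_neg: "linv f \<Longrightarrow> f (- x) = - f x"
  using li_add[of f x "-x"] li_zero[of f] by (metis add.right_inverse neg_eq_iff_add_eq_0)
lemma li_diff: "linv f \<Longrightarrow> f (x - y) = f x - f y"
  using li_add[of f x "-y"] li_neg[of f y] by simp
lemma li_inj: "linv f \<Longrightarrow> inj f" by (metis injI li_inv)
lemma li_img_img: "linv f \<Longrightarrow> f ` f ` X = X"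
proof -
  assume f: "linv f"
  then have "\<And>x. f (f x) = x" by (rule li_inv)
  then show ?thesis by (simp add: image_image)
qed

lemma li_mem: "linv f \<Longrightarrow> f x \<in> f ` X \<longleftrightarrow> x \<in> X"
proof -
  assume "linv f" then have "inj f" by (rule li_inj)
  then show ?thesis by (rule inj_image_mem_iff)
qed

lemma li_subspace: "linv f \<Longrightarrow> lvs_subspace sm X \<Longrightarrow> lvs_subspace sm (f ` X)"
proof -
  assume f: "linv f" and X: "lvs_subspace sm X"
  have "0 \<in> f ` X" using li_zero[OF f] sub_zero[OF X] by (metis image_eqI)
  moreover have "\<forall>x\<in>f ` X. \<forall>y\<in>f ` X. x + y \<in> f ` X"
  proof (intro ballI)
    fix x y assume "x \<in> f ` X" "y \<in> f ` X"
    then obtain x0 y0 where "x0 \<in> X" "y0 \<in> X" "x = f x0" "y = f y0" by blast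
    then have "x + y = f (x0 + y0)" "x0 + y0 \<in> X" using li_add[OF f] sub_add[OF X] by auto
    then show "x + y \<in> f ` X" by blast
  qed
  moreover have "\<forall>a. \<forall>x\<in>f ` X. sm a x \<in> f ` X"
  proof (intro allI ballI)
    fix a x assume "x \<in> f ` X"
    then obtain x0 where "x0 \<in> X" "x = f x0" by blast
    then have "sm a x = f (sm a x0)" "sm a x0 \<in> X" using li_sm[OF f] sub_sm[OF X] by auto
    then show "sm a x \<in> f ` X" by blast
  qed
  ultimately show ?thesis unfolding lvs_subspace_def by blast
qed

lemma li_set_sum: "linv f \<Longrightarrow> f ` set_sum X Y = set_sum (f ` X) (f ` Y)"
proof -
  assume f: "linv f"
  show ?thesis
  proof
    show "f ` set_sum X Y \<subseteq> set_sum (f ` X) (f ` Y)"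
    proof
      fix z assume "z \<in> f ` set_sum X Y"
      then obtain x y where "x \<in> X" "y \<in> Y" "z = f (x + y)" unfolding set_sum_def by blast
      then show "z \<in> set_sum (f ` X) (f ` Y)" unfolding set_sum_def using li_add[OF f] by blast
    qed
    show "set_sum (f ` X) (f ` Y) \<subseteq> f ` set_sum X Y"
    proof
      fix z assume "z \<in> set_sum (f ` X) (f ` Y)"
      then obtain x y where "x \<in> X" "y \<in> Y" "z = f x + f y" unfolding set_sum_def by blast
      then have "z = f (x + y)" "x + y \<in> set_sum X Y" using li_add[OF f] unfolding set_sum_def by auto
      then show "z \<in> f ` set_sum X Y" by blast
    qed
  qed
qed

lemma li_coset: "linv f \<Longrightarrow> f ` coset x X = coset (f x) (f ` X)"
proof -
  assume f: "linv f"
  show ?thesis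
  proof
    show "f ` coset x X \<subseteq> coset (f x) (f ` X)"
    proof
      fix z assume "z \<in> f ` coset x X"
      then obtain y where "y \<in> X" "z = f (x + y)" unfolding coset_def by blast
      then show "z \<in> coset (f x) (f ` X)" unfolding coset_def using li_add[OF f] by blast
    qed
    show "coset (f x) (f ` X) \<subseteq> f ` coset x X"
    proof
      fix z assume "z \<in> coset (f x) (f ` X)"
      then obtain y where "y \<in> X" "z = f x + f y" unfolding coset_def by blast
      then have "z = f (x + y)" "x + y \<in> coset x X" using li_add[OF f] unfolding coset_def by auto
      then show "z \<in> f ` coset x X" by blast
    qed
  qed
qed

lemma li_qdo: "linv f \<Longrightarrow> quot_dim_one sm W X \<Longrightarrow> quot_dim_one sm (f ` W) (f ` X)"
proof -
  assume f: "linv f" and q: "quot_dim_one sm W X"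
  then obtain v where v: "v \<in> W" "v \<notin> X" "\<forall>w\<in>W. \<exists>c. w - sm c v \<in> X" and XW: "X \<subseteq> W"
    unfolding quot_dim_one_def by blast
  have "\<forall>w\<in>f ` W. \<exists>c. w - sm c (f v) \<in> f ` X"
  proof
    fix w assume "w \<in> f ` W"
    then obtain w0 where "w0 \<in> W" "w = f w0" by blast
    then obtain c where "w0 - sm c v \<in> X" using v by blast
    then have "f (w0 - sm c v) \<in> f ` X" by blast
    then show "\<exists>c. w - sm c (f v) \<in> f ` X" using f \<open>w = f w0\<close> by (auto simp: li_diff li_sm)
  qed
  moreover have "f v \<in> f ` W" "f v \<notin> f ` X" using v li_mem[OF f] by auto
  ultimately show ?thesis using XW unfolding quot_dim_one_def by blast
qed

lemma li_adj: "linv f \<Longrightarrow> adjacent sm X Y \<Longrightarrow> adjacent sm (f ` X) (f ` Y)"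
  unfolding adjacent_def using li_qdo[of f "set_sum X Y" X] li_qdo[of f "set_sum X Y" Y] li_set_sum[of f X Y] by simp

lemma coset_eq: "lvs_subspace sm X \<Longrightarrow> coset x X = coset y X \<longleftrightarrow> x - y \<in> X"
proof
  assume X: "lvs_subspace sm X" and e: "coset x X = coset y X"
  have "x \<in> coset x X" unfolding coset_def using sub_zero[OF X] by force
  then have "x \<in> coset y X" using e by simp
  then obtain z where "z \<in> X" "x = y + z" unfolding coset_def by blast
  then show "x - y \<in> X" by simp
next
  assume X: "lvs_subspace sm X" and d: "x - y \<in> X"
  show "coset x X = coset y X"
  proof
    show "coset x X \<subseteq> coset y X"
    proof
      fix u assume "u \<in> coset x X"
      then obtain z where z: "z \<in> X" "u = x + z" unfolding coset_def by blast
      then have "u = y + ((x - y) + z)" by simp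
      moreover have "(x - y) + z \<in> X" using sub_add[OF X d z(1)] .
      ultimately show "u \<in> coset y X" unfolding coset_def by blast
    qed
  next
    show "coset y X \<subseteq> coset x X"
    proof
      fix u assume "u \<in> coset y X"
      then obtain z where z: "z \<in> X" "u = y + z" unfolding coset_def by blast
      then have "u = x + (z - (x - y))" by simp
      moreover have "z - (x - y) \<in> X" using sub_diff[OF X z(1) d] .
      ultimately show "u \<in> coset x X" unfolding coset_def by blast
    qed
  qed
qed

lemma li_iso: "linv f \<Longrightarrow> lvs_subspace sm X \<Longrightarrow> iso_quot sm X \<Longrightarrow> iso_quot sm (f ` X)"
proof -
  assume f: "linv f" and X: "lvs_subspace sm X" and "iso_quot sm X"
  then obtain g where g: "bij_betw g X (range (\<lambda>v. coset v X))"
    and ga: "\<forall>a\<in>X. \<forall>b\<in>X. \<forall>x y. g a = coset x X \<and> g b = coset y X \<longrightarrow> g (a + b) = coset (x + y) X"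
    and gs: "\<forall>c. \<forall>a\<in>X. \<forall>x. g a = coset x X \<longrightarrow> g (sm c a) = coset (sm c x) X"
    unfolding iso_quot_def by blast
  define g' where "g' = (\<lambda>a. f ` g (f a))"
  have b1: "bij_betw f (f ` X) X"
    by (rule bij_betw_imageI[OF inj_on_subset[OF li_inj[OF f]] li_img_img[OF f]]) simp
  have b2: "bij_betw (\<lambda>S. f ` S) (range (\<lambda>v. coset v X)) (range (\<lambda>v. coset v (f ` X)))"
  proof (intro bij_betw_imageI)
    show "inj_on ((`) f) (range (\<lambda>v. coset v X))"
    proof (rule inj_onI)
      fix A A' assume "f ` A = f ` A'"
      then have "f ` f ` A = f ` f ` A'" by simp
      then show "A = A'" using li_img_img[OF f] by simp
    qed
    show "(`) f ` range (\<lambda>v. coset v X) = range (\<lambda>v. coset v (f ` X))"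
    proof
      show "(`) f ` range (\<lambda>v. coset v X) \<subseteq> range (\<lambda>v. coset v (f ` X))"
        using li_coset[OF f] by auto
      show "range (\<lambda>v. coset v (f ` X)) \<subseteq> (`) f ` range (\<lambda>v. coset v X)"
      proof
        fix S assume "S \<in> range (\<lambda>v. coset v (f ` X))"
        then obtain v where "S = coset v (f ` X)" by blast
        then have "S = f ` coset (f v) X" using li_coset[OF f, of "f v" X] li_inv[OF f] by simp
        then show "S \<in> (`) f ` range (\<lambda>v. coset v X)" by blast
      qed
    qed
  qed
  have "bij_betw g' (f ` X) (range (\<lambda>v. coset v (f ` X)))"
  proof -
    have "bij_betw ((\<lambda>S. f ` S) \<circ> (g \<circ> f)) (f ` X) (range (\<lambda>v. coset v (f ` X)))"
      by (rule bij_betw_trans[OF bij_betw_trans[OF b1 g] b2])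
    then show ?thesis unfolding g'_def comp_def by simp
  qed
  note h1 = this
  have key: "g' a = coset x (f ` X) \<Longrightarrow> g (f a) = coset (f x) X" for a x
  proof -
    assume "g' a = coset x (f ` X)"
    then have "f ` f ` g (f a) = f ` coset x (f ` X)" unfolding g'_def by simp
    then show "g (f a) = coset (f x) X" using li_coset[OF f, of x "f ` X"] li_img_img[OF f] by simp
  qed
  have h2: "\<forall>a\<in>f ` X. \<forall>b\<in>f ` X. \<forall>x y. g' a = coset x (f ` X) \<and> g' b = coset y (f ` X) \<longrightarrow> g' (a + b) = coset (x + y) (f ` X)"
  proof (intro ballI allI impI)
    fix a b x y assume ab: "a \<in> f ` X" "b \<in> f ` X" and h: "g' a = coset x (f ` X) \<and> g' b = coset y (f ` X)"
    have "f a \<in> X" "f b \<in> X" using ab li_inv[OF f] by auto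
    then have "g (f a + f b) = coset (f x + f y) X" using ga key h by blast
    then have "g (f (a + b)) = coset (f (x + y)) X" using li_add[OF f] by simp
    then show "g' (a + b) = coset (x + y) (f ` X)"
      unfolding g'_def using li_coset[OF f] li_inv[OF f] by simp
  qed
  have h3: "\<forall>c. \<forall>a\<in>f ` X. \<forall>x. g' a = coset x (f ` X) \<longrightarrow> g' (sm c a) = coset (sm c x) (f ` X)"
  proof (intro ballI allI impI)
    fix c a x assume a: "a \<in> f ` X" and h: "g' a = coset x (f ` X)"
    have "f a \<in> X" using a li_inv[OF f] by auto
    then have "g (sm c (f a)) = coset (sm c (f x)) X" using gs key h by blast
    then have "g (f (sm c a)) = coset (f (sm c x)) X" using li_sm[OF f] by simp
    then show "g' (sm c a) = coset (sm c x) (f ` X)"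
      unfolding g'_def using li_coset[OF f] li_inv[OF f] by simp
  qed
  show ?thesis unfolding iso_quot_def using h1 h2 h3 by (intro exI[of _ g'] conjI) assumption+
qed

lemma li_calG: "linv f \<Longrightarrow> X \<in> calG sm \<Longrightarrow> f ` X \<in> calG sm"
  unfolding calG_def using li_subspace li_iso by blast

lemma adj_sym: "adjacent sm X Y \<Longrightarrow> adjacent sm Y X"
proof -
  have "set_sum X Y = set_sum Y X" by (auto simp: set_sum_def) (metis add.commute)+
  then show "adjacent sm X Y \<Longrightarrow> adjacent sm Y X" unfolding adjacent_def by simp
qed

lemma gen_iso: "lvs_subspace sm P \<Longrightarrow> lvs_subspace sm Q \<Longrightarrow> P \<inter> Q \<subseteq> {0} \<Longrightarrow> set_sum P Q = UNIV
  \<Longrightarrow> linv t \<Longrightarrow> t ` P \<subseteq> Q \<Longrightarrow> t ` Q \<subseteq> P \<Longrightarrow> iso_quot sm P"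
proof -
  assume P: "lvs_subspace sm P" and Q: "lvs_subspace sm Q" and PQ: "P \<inter> Q \<subseteq> {0}"
    and S: "set_sum P Q = UNIV" and t: "linv t" and tP: "t ` P \<subseteq> Q" and tQ: "t ` Q \<subseteq> P"
  define g where "g = (\<lambda>x. coset (t x) P)"
  have "inj_on g P"
  proof (rule inj_onI)
    fix x y assume xy: "x \<in> P" "y \<in> P" "g x = g y"
    then have "t x - t y \<in> P" unfolding g_def using coset_eq[OF P] by simp
    moreover have "t x - t y \<in> Q" using tP sub_diff[OF P xy(1,2)] li_diff[OF t] by auto
    ultimately have "t (x - y) = 0" using PQ li_diff[OF t] by auto
    then have "x - y = 0" using li_inv[OF t, of "x - y"] li_zero[OF t] by simp
    then show "x = y" by simp
  qed
  moreover have "g ` P = range (\<lambda>v. coset v P)"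
  proof
    show "g ` P \<subseteq> range (\<lambda>v. coset v P)" unfolding g_def by auto
    show "range (\<lambda>v. coset v P) \<subseteq> g ` P"
    proof
      fix S assume "S \<in> range (\<lambda>v. coset v P)"
      then obtain v where Sv: "S = coset v P" by blast
      have "v \<in> set_sum P Q" using S by simp
      then obtain p q where pq: "p \<in> P" "q \<in> Q" "v = p + q" unfolding set_sum_def by blast
      have "t q \<in> P" using tQ pq by auto
      moreover have "g (t q) = coset q P" unfolding g_def using li_inv[OF t] by simp
      moreover have "coset q P = coset v P" using coset_eq[OF P] pq sub_neg[OF P] by simp
      ultimately show "S \<in> g ` P" using Sv by (metis image_eqI)
    qed
  qed
  ultimately have h1: "bij_betw g P (range (\<lambda>v. coset v P))" unfolding bij_betw_def by blast
  have h2: "\<forall>a\<in>P. \<forall>b\<in>P. \<forall>x y. g a = coset x P \<and> g b = coset y P \<longrightarrow> g (a + b) = coset (x + y) P"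
  proof (intro ballI allI impI)
    fix a b x y assume "a \<in> P" "b \<in> P" "g a = coset x P \<and> g b = coset y P"
    then have "t a - x \<in> P" "t b - y \<in> P" unfolding g_def using coset_eq[OF P] by auto
    then have "(t a - x) + (t b - y) \<in> P" using sub_add[OF P] by blast
    then have "t (a + b) - (x + y) \<in> P" using li_add[OF t] by (simp add: algebra_simps)
    then show "g (a + b) = coset (x + y) P" unfolding g_def using coset_eq[OF P] by simp
  qed
  have h3: "\<forall>c. \<forall>a\<in>P. \<forall>x. g a = coset x P \<longrightarrow> g (sm c a) = coset (sm c x) P"
  proof (intro ballI allI impI)
    fix c a x assume "a \<in> P" "g a = coset x P"
    then have "t a - x \<in> P" unfolding g_def using coset_eq[OF P] by auto
    then have "sm c (t a - x) \<in> P" using sub_sm[OF P] by blast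
    then have "t (sm c a) - sm c x \<in> P" using li_sm[OF t] sm_diff by simp
    then show "g (sm c a) = coset (sm c x) P" unfolding g_def using coset_eq[OF P] by simp
  qed
  show ?thesis unfolding iso_quot_def using h1 h2 h3 by (intro exI[of _ g] conjI) assumption+
qed

lemma inv_step: "lvs_subspace sm Y \<Longrightarrow> adjacent sm X Y \<Longrightarrow> P \<subseteq> lvs_span sm (X \<union> F)
   \<Longrightarrow> \<exists>u. P \<subseteq> lvs_span sm (Y \<union> insert u F)"
proof -
  assume Y: "lvs_subspace sm Y" and a: "adjacent sm X Y" and P: "P \<subseteq> lvs_span sm (X \<union> F)"
  then obtain u where u: "\<forall>w\<in>set_sum X Y. \<exists>c. w - sm c u \<in> Y"
    unfolding adjacent_def quot_dim_one_def by blast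
  define Sp where "Sp = lvs_span sm (Y \<union> insert u F)"
  have YS: "Y \<union> insert u F \<subseteq> Sp" unfolding Sp_def by (rule span_sup)
  have subSp: "lvs_subspace sm Sp" unfolding Sp_def by (rule span_subspace)
  have "X \<union> F \<subseteq> Sp"
  proof
    fix x assume "x \<in> X \<union> F"
    then show "x \<in> Sp"
    proof
      assume x: "x \<in> X"
      have "x \<in> set_sum X Y" using x sub_zero[OF Y] unfolding set_sum_def
        by (intro CollectI exI[of _ x] exI[of _ 0]) simp
      then obtain c where c: "x - sm c u \<in> Y" using u by blast
      have "x - sm c u \<in> Sp" using c YS by blast
      moreover have "u \<in> Sp" using YS by blast
      then have "sm c u \<in> Sp" using sub_sm[OF subSp] by blast
      ultimately have "(x - sm c u) + sm c u \<in> Sp"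
        using sub_add[OF subSp] by blast
      then show ?thesis by simp
    next
      assume "x \<in> F" then show ?thesis using YS by blast
    qed
  qed
  then have "lvs_span sm (X \<union> F) \<subseteq> Sp"
    using span_least[OF subSp] by blast
  then show ?thesis using P unfolding Sp_def by blast
qed

end




context lv
begin

lemma set_sum_comm: "set_sum X Y = set_sum Y X"
  by (auto simp: set_sum_def) (metis add.commute)+

lemma final:
  assumes PG: "P \<in> calG sm" and QG: "Q \<in> calG sm" and PQ: "distant P Q"
    and f: "linv f" and adjP: "adjacent sm P (f ` P)" and nd: "\<not> distant (f ` P) Q"
    and NoI: "\<And>F. finite F \<Longrightarrow> \<not> P \<subseteq> lvs_span sm (Q \<union> F)"
  shows "\<exists>\<phi>. bij_betw \<phi> (calG sm) (calG sm) \<and>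
           (\<forall>X\<in>calG sm. \<forall>Y\<in>calG sm. adjacent sm X Y \<longleftrightarrow> adjacent sm (\<phi> X) (\<phi> Y)) \<and>
           (\<exists>P\<in>calG sm. \<exists>Q\<in>calG sm. distant P Q \<and> \<not> distant (\<phi> P) (\<phi> Q))"
proof -
  define R where "R = {(X, Y). X \<in> calG sm \<and> Y \<in> calG sm \<and> adjacent sm X Y}"
  define C where "C = {X. (P, X) \<in> R\<^sup>*}"
  define \<phi> where "\<phi> = (\<lambda>X. if X \<in> C then f ` X else X)"
  have fPG: "f ` P \<in> calG sm" using li_calG[OF f PG] .
  have a: "X \<in> calG sm" if "X \<in> C" for X
  proof -
    have "(P, X) \<in> R\<^sup>*" using that unfolding C_def by simp
    then show ?thesis by (induction rule: rtrancl_induct) (auto simp: PG R_def)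
  qed
  have Rf: "(f ` Y, f ` Z) \<in> R" if "(Y, Z) \<in> R" for Y Z
    using that li_calG[OF f] li_adj[OF f] unfolding R_def by auto
  have b: "f ` X \<in> C" if "X \<in> C" for X
  proof -
    have "(P, X) \<in> R\<^sup>*" using that unfolding C_def by simp
    then have "(f ` P, f ` X) \<in> R\<^sup>*"
    proof (induction rule: rtrancl_induct)
      case base then show ?case by simp
    next
      case (step Y Z)
      then show ?case using Rf[of Y Z] by (meson rtrancl.rtrancl_into_rtrancl)
    qed
    moreover have "(P, f ` P) \<in> R" unfolding R_def using PG fPG adjP by simp
    ultimately have "(P, f ` X) \<in> R\<^sup>*" by (meson converse_rtrancl_into_rtrancl)
    then show ?thesis unfolding C_def by simp
  qed
  have c: "Y \<in> C" if "X \<in> C" "Y \<in> calG sm" "adjacent sm X Y" for X Y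
  proof -
    have "(X, Y) \<in> R" unfolding R_def using a[OF that(1)] that(2,3) by simp
    then have "(P, Y) \<in> R\<^sup>*" using that(1) unfolding C_def by (meson rtrancl.rtrancl_into_rtrancl mem_Collect_eq)
    then show ?thesis unfolding C_def by simp
  qed
  have d: "\<exists>F. finite F \<and> P \<subseteq> lvs_span sm (X \<union> F)" if "X \<in> C" for X
  proof -
    have "(P, X) \<in> R\<^sup>*" using that unfolding C_def by simp
    then show ?thesis
    proof (induction rule: rtrancl_induct)
      case base
      have "P \<subseteq> lvs_span sm (P \<union> {})" using span_sup by blast
      then show ?case by blast
    next
      case (step Y Z)
      then obtain F where F: "finite F" "P \<subseteq> lvs_span sm (Y \<union> F)" by blast
      have "lvs_subspace sm Z" "adjacent sm Y Z" using step(2) unfolding R_def calG_def by auto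
      then obtain u where "P \<subseteq> lvs_span sm (Z \<union> insert u F)" using inv_step F(2) by blast
      then show ?case using F(1) by blast
    qed
  qed
  have PC: "P \<in> C" unfolding C_def by simp
  have QC: "Q \<notin> C" using d NoI by blast
  have inv: "\<phi> (\<phi> X) = X" for X
  proof (cases "X \<in> C")
    case True
    then show ?thesis unfolding \<phi>_def using b[OF True] li_img_img[OF f] by simp
  next
    case False
    then show ?thesis unfolding \<phi>_def by simp
  qed
  have img: "\<phi> X \<in> calG sm" if "X \<in> calG sm" for X
    unfolding \<phi>_def using that li_calG[OF f] by simp
  have bij: "bij_betw \<phi> (calG sm) (calG sm)"
    by (rule bij_betw_byWitness[where f'=\<phi>]) (use inv img in auto)
  have adj: "adjacent sm X Y \<longleftrightarrow> adjacent sm (\<phi> X) (\<phi> Y)" if XG: "X \<in> calG sm" and YG: "Y \<in> calG sm" for X Y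
  proof (cases "X \<in> C")
    case XC: True
    show ?thesis
    proof (cases "Y \<in> C")
      case YC: True
      have "adjacent sm (f ` f ` X) (f ` f ` Y)" if "adjacent sm (f ` X) (f ` Y)"
        using li_adj[OF f that] .
      then show ?thesis unfolding \<phi>_def using XC YC li_adj[OF f] li_img_img[OF f] by auto
    next
      case YC: False
      have "\<not> adjacent sm X Y" using c[OF XC YG] YC by blast
      moreover have "\<not> adjacent sm (f ` X) Y" using c[OF b[OF XC] YG] YC by blast
      ultimately show ?thesis unfolding \<phi>_def using XC YC by simp
    qed
  next
    case XC: False
    show ?thesis
    proof (cases "Y \<in> C")
      case YC: True
      have "\<not> adjacent sm X Y" using c[OF YC XG] XC adj_sym by blast
      moreover have "\<not> adjacent sm X (f ` Y)" using c[OF b[OF YC] XG] XC adj_sym by blast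
      ultimately show ?thesis unfolding \<phi>_def using XC YC by simp
    next
      case YC: False
      show ?thesis unfolding \<phi>_def using XC YC by simp
    qed
  qed
  have "distant P Q \<and> \<not> distant (\<phi> P) (\<phi> Q)" unfolding \<phi>_def using PC QC PQ nd by simp
  then show ?thesis using bij adj PG QG by blast
qed

end

lemma split_inf:
  assumes "infinite (B :: 'a set)"
  shows "\<exists>B1 B2 \<sigma>. B1 \<union> B2 = B \<and> B1 \<inter> B2 = {} \<and> (\<forall>x. \<sigma> (\<sigma> x) = x) \<and> \<sigma> ` B1 \<subseteq> B2 \<and> \<sigma> ` B2 \<subseteq> B1
     \<and> infinite B1 \<and> (\<forall>x. x \<notin> B \<longrightarrow> \<sigma> x = x)"
proof -
  have "|B| \<le>o |B|" by (rule BNF_Cardinal_Order_Relation.card_of_mono1) simp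
  then have "|B <+> B| =o |B|" using BNF_Cardinal_Order_Relation.card_of_Plus_infinite1 assms by blast
  then obtain e where e: "bij_betw e (B <+> B) B" using BNF_Cardinal_Order_Relation.card_of_ordIso by blast
  define B1 where "B1 = e ` Inl ` B"
  define B2 where "B2 = e ` Inr ` B"
  define sw where "sw = (\<lambda>s. case s of Inl a \<Rightarrow> Inr a | Inr a \<Rightarrow> (Inl a :: 'a + 'a))"
  define \<sigma> where "\<sigma> = (\<lambda>x. if x \<in> B then e (sw (inv_into (B <+> B) e x)) else x)"
  have inje: "inj_on e (B <+> B)" and ime: "e ` (B <+> B) = B" using e by (auto simp: bij_betw_def)
  have sig: "\<sigma> (e s) = e (sw s)" if "s \<in> B <+> B" for s
  proof -
    have "e s \<in> B" using that ime by blast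
    then show ?thesis unfolding \<sigma>_def using inv_into_f_f[OF inje that] by simp
  qed
  have swB: "sw s \<in> B <+> B" if "s \<in> B <+> B" for s using that unfolding sw_def by (auto split: sum.splits)
  have swsw: "sw (sw s) = s" for s unfolding sw_def by (auto split: sum.splits)
  have "\<sigma> (\<sigma> x) = x" for x
  proof (cases "x \<in> B")
    case True
    then obtain s where s: "s \<in> B <+> B" "x = e s" using ime by blast
    then show ?thesis using sig[OF s(1)] sig[OF swB[OF s(1)]] swsw by simp
  next
    case False then show ?thesis unfolding \<sigma>_def by simp
  qed
  moreover have "\<sigma> ` B1 \<subseteq> B2"
  proof
    fix y assume "y \<in> \<sigma> ` B1"
    then obtain a where "a \<in> B" "y = \<sigma> (e (Inl a))" unfolding B1_def by blast
    then show "y \<in> B2" using sig[of "Inl a"] unfolding B2_def sw_def by auto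
  qed
  moreover have "\<sigma> ` B2 \<subseteq> B1"
  proof
    fix y assume "y \<in> \<sigma> ` B2"
    then obtain a where "a \<in> B" "y = \<sigma> (e (Inr a))" unfolding B2_def by blast
    then show "y \<in> B1" using sig[of "Inr a"] unfolding B1_def sw_def by auto
  qed
  moreover have "B1 \<union> B2 = B"
  proof -
    have "B <+> B = Inl ` B \<union> Inr ` B" by auto
    then show ?thesis using ime unfolding B1_def B2_def by (simp add: image_Un)
  qed
  moreover have "B1 \<inter> B2 = {}"
  proof -
    have "e ` (Inl ` B) \<inter> e ` (Inr ` B) = e ` (Inl ` B \<inter> Inr ` B)"
      by (rule inj_on_image_Int[OF inje, symmetric]) auto
    then show ?thesis unfolding B1_def B2_def by auto
  qed
  moreover have "infinite B1"
  proof -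
    have "inj_on (e \<circ> Inl) B" using inje by (auto simp: inj_on_def)
    then show ?thesis unfolding B1_def image_comp using assms finite_imageD by blast
  qed
  moreover have "\<forall>x. x \<notin> B \<longrightarrow> \<sigma> x = x" unfolding \<sigma>_def by simp
  ultimately show ?thesis by blast
qed




context lvb
begin

lemma construct:
  assumes infB: "infinite B"
  shows "\<exists>\<phi>. bij_betw \<phi> (calG sm) (calG sm) \<and>
           (\<forall>X\<in>calG sm. \<forall>Y\<in>calG sm. adjacent sm X Y \<longleftrightarrow> adjacent sm (\<phi> X) (\<phi> Y)) \<and>
           (\<exists>P\<in>calG sm. \<exists>Q\<in>calG sm. distant P Q \<and> \<not> distant (\<phi> P) (\<phi> Q))"
proof -
  from split_inf[OF infB] obtain B1 B2 \<sigma> where H: "B1 \<union> B2 = B \<and> B1 \<inter> B2 = {} \<and> (\<forall>x. \<sigma> (\<sigma> x) = x) \<and> \<sigma> ` B1 \<subseteq> B2 \<and> \<sigma> ` B2 \<subseteq> B1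
     \<and> infinite B1 \<and> (\<forall>x. x \<notin> B \<longrightarrow> \<sigma> x = x)" by (elim exE)
  have U: "B1 \<union> B2 = B" and D: "B1 \<inter> B2 = {}" and ss: "\<And>x. \<sigma> (\<sigma> x) = x"
    and s1: "\<sigma> ` B1 \<subseteq> B2" and s2: "\<sigma> ` B2 \<subseteq> B1" and inf1: "infinite B1"
    using H by auto
  have B1B: "B1 \<subseteq> B" and B2B: "B2 \<subseteq> B" using U by auto
  have sB: "\<sigma> ` B \<subseteq> B" using U s1 s2 by auto
  define \<tau> where "\<tau> = (\<lambda>v. lc (\<lambda>b. coord v (\<sigma> b)))"
  have suppsig: "supp (\<lambda>b. c (\<sigma> b)) = \<sigma> ` supp c" for c :: "'v \<Rightarrow> 'k"
  proof
    show "supp (\<lambda>b. c (\<sigma> b)) \<subseteq> \<sigma> ` supp c"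
    proof
      fix b assume "b \<in> supp (\<lambda>b. c (\<sigma> b))"
      then have "\<sigma> b \<in> supp c" by (simp add: supp_def)
      then show "b \<in> \<sigma> ` supp c" using ss[of b] by (metis image_eqI)
    qed
    show "\<sigma> ` supp c \<subseteq> supp (\<lambda>b. c (\<sigma> b))" using ss by (auto simp: supp_def)
  qed
  have fst: "fs B (\<lambda>b. coord v (\<sigma> b))" for v
    using coord[of v] suppsig[of "coord v"] sB unfolding fs_def by auto
  have cst: "coord (\<tau> v) = (\<lambda>b. coord v (\<sigma> b))" for v
    unfolding \<tau>_def using fst by (intro coord_eq) auto
  have t: "linv \<tau>" unfolding linv_def
  proof (intro conjI allI)
    fix x y
    show "\<tau> (x + y) = \<tau> x + \<tau> y" unfolding \<tau>_def coord_add
      using lc_add[of "\<lambda>b. coord x (\<sigma> b)" "\<lambda>b. coord y (\<sigma> b)"] fst[of x] fst[of y] unfolding fs_def by simp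
  next
    fix a x
    show "\<tau> (sm a x) = sm a (\<tau> x)" unfolding \<tau>_def coord_smult
      using lc_smult[of "\<lambda>b. coord x (\<sigma> b)" a] fst[of x] unfolding fs_def by simp
  next
    fix x
    have "\<tau> (\<tau> x) = lc (\<lambda>b. coord (\<tau> x) (\<sigma> b))" unfolding \<tau>_def by simp
    also have "\<dots> = lc (\<lambda>b. coord x (\<sigma> (\<sigma> b)))" unfolding cst by simp
    also have "\<dots> = x" unfolding ss using coord[of x] by simp
    finally show "\<tau> (\<tau> x) = x" .
  qed
  define P where "P = lvs_span sm B1"
  define Q where "Q = lvs_span sm B2"
  have inP: "v \<in> P \<longleftrightarrow> supp (coord v) \<subseteq> B1" for v unfolding P_def using in_span_iff[OF B1B] .
  have inQ: "v \<in> Q \<longleftrightarrow> supp (coord v) \<subseteq> B2" for v unfolding Q_def using in_span_iff[OF B2B] .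
  have Psub: "lvs_subspace sm P" and Qsub: "lvs_subspace sm Q" unfolding P_def Q_def by (rule span_subspace)+
  have tP: "\<tau> ` P \<subseteq> Q"
  proof
    fix w assume "w \<in> \<tau> ` P"
    then obtain v where "v \<in> P" "w = \<tau> v" by blast
    then have w1: "supp (coord w) = \<sigma> ` supp (coord v)" and w2: "supp (coord v) \<subseteq> B1"
      using cst[of v] suppsig[of "coord v"] inP[of v] by simp_all
    have "\<sigma> ` supp (coord v) \<subseteq> \<sigma> ` B1" using w2 by (rule image_mono)
    then have "supp (coord w) \<subseteq> B2" using w1 s1 by simp
    then show "w \<in> Q" using inQ[of w] by simp
  qed
  have tQ: "\<tau> ` Q \<subseteq> P"
  proof
    fix w assume "w \<in> \<tau> ` Q"
    then obtain v where "v \<in> Q" "w = \<tau> v" by blast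
    then have w1: "supp (coord w) = \<sigma> ` supp (coord v)" and w2: "supp (coord v) \<subseteq> B2"
      using cst[of v] suppsig[of "coord v"] inQ[of v] by simp_all
    have "\<sigma> ` supp (coord v) \<subseteq> \<sigma> ` B2" using w2 by (rule image_mono)
    then have "supp (coord w) \<subseteq> B1" using w1 s2 by simp
    then show "w \<in> P" using inP[of w] by simp
  qed
  have PQ0: "P \<inter> Q \<subseteq> {0}"
  proof
    fix v assume "v \<in> P \<inter> Q"
    then have "supp (coord v) \<subseteq> B1 \<inter> B2" using inP inQ by blast
    then have "coord v = (\<lambda>b. 0)" using D by (auto simp: supp_def)
    then have "v = 0" using coord[of v] by simp
    then show "v \<in> {0}" by simp
  qed
  have SPQ: "set_sum P Q = UNIV"
  proof -
    have "v \<in> set_sum P Q" for v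
    proof -
      define c1 where "c1 = (\<lambda>b. if b \<in> B1 then coord v b else 0)"
      define c2 where "c2 = (\<lambda>b. if b \<in> B2 then coord v b else 0)"
      have fsv: "fs B (coord v)" using coord by blast
      have cv: "coord v = (\<lambda>b. c1 b + c2 b)"
      proof
        fix b show "coord v b = c1 b + c2 b"
          using fsv U D unfolding c1_def c2_def fs_def supp_def by auto
      qed
      have f1: "fs B1 c1" using fsv unfolding fs_def c1_def supp_def
        by (auto intro: finite_subset[of _ "{b. coord v b \<noteq> 0}"])
      have f2: "fs B2 c2" using fsv unfolding fs_def c2_def supp_def
        by (auto intro: finite_subset[of _ "{b. coord v b \<noteq> 0}"])
      have "v = lc c1 + lc c2" using coord[of v] cv lc_add f1 f2 unfolding fs_def by metis
      moreover have "lc c1 \<in> P" "lc c2 \<in> Q" unfolding P_def Q_def using lc_in_span f1 f2 by auto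
      ultimately show ?thesis unfolding set_sum_def by blast
    qed
    then show ?thesis by blast
  qed
  have PG: "P \<in> calG sm" unfolding calG_def using gen_iso[OF Psub Qsub PQ0 SPQ t tP tQ] Psub by blast
  have QG: "Q \<in> calG sm" unfolding calG_def
    using gen_iso[OF Qsub Psub _ _ t tQ tP] PQ0 SPQ set_sum_comm[of Q P] Qsub by blast
  have dPQ: "distant P Q" unfolding distant_def using PQ0 SPQ sub_zero[OF Psub] sub_zero[OF Qsub] by blast
  obtain p where p1: "p \<in> B1" using inf1 by (metis finite.emptyI ex_in_conv)
  define q where "q = \<sigma> p"
  have q2: "q \<in> B2" using s1 p1 unfolding q_def by blast
  have pq: "p \<noteq> q" using p1 q2 D by blast
  have pB: "p \<in> B" and qB: "q \<in> B" using p1 q2 B1B B2B by auto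
  define \<gamma> where "\<gamma> = (\<lambda>v. coord v p - coord v q)"
  define w where "w = q - p"
  define f where "f = (\<lambda>v. v + sm (\<gamma> v) w)"
  have gadd: "\<gamma> (x + y) = \<gamma> x + \<gamma> y" for x y unfolding \<gamma>_def coord_add by simp
  have gsm: "\<gamma> (sm a x) = a * \<gamma> x" for a x unfolding \<gamma>_def coord_smult by (simp add: right_diff_distrib)
  have gp: "\<gamma> p = 1" unfolding \<gamma>_def using coord_basis[OF pB] pq by simp
  have gw: "\<gamma> w = - 2" unfolding \<gamma>_def w_def coord_diff using coord_basis[OF pB] coord_basis[OF qB] pq by simp
  have fl: "linv f" unfolding linv_def
  proof (intro conjI allI)
    fix x y show "f (x + y) = f x + f y" unfolding f_def gadd sm_add2 by (simp add: algebra_simps)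
  next
    fix a x show "f (sm a x) = sm a (f x)" unfolding f_def gsm sm_mult sm_add by simp
  next
    fix x
    have "f (f x) = x + sm (\<gamma> x) w + sm (\<gamma> x + \<gamma> x * (- 2)) w"
      unfolding f_def gadd gsm gw by simp
    also have "\<dots> = x + sm (\<gamma> x + (\<gamma> x + \<gamma> x * (- 2))) w" by (simp add: sm_add2 add.assoc)
    also have "\<gamma> x + (\<gamma> x + \<gamma> x * (- 2)) = 0" by (simp add: mult_2_right)
    finally show "f (f x) = x" by simp
  qed
  have fp: "f p = q" unfolding f_def gp w_def by simp
  have PfG: "f ` P \<in> calG sm" using li_calG[OF fl PG] .
  have pP: "p \<in> P" and qQ: "q \<in> Q" unfolding P_def Q_def using p1 q2 span_sup by blast+
  have qnP: "q \<notin> P" using inP coord_basis[OF qB] q2 D by (auto simp: supp_def)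
  have f0: "f 0 = 0" using li_zero[OF fl] .
  have adjP: "adjacent sm P (f ` P)" unfolding adjacent_def
  proof
    show "quot_dim_one sm (set_sum P (f ` P)) P" unfolding quot_dim_one_def
    proof (intro conjI bexI[of _ q] ballI)
      show "P \<subseteq> set_sum P (f ` P)"
      proof
        fix x assume "x \<in> P"
        moreover have "0 \<in> f ` P" using f0 sub_zero[OF Psub] by (metis image_eqI)
        ultimately show "x \<in> set_sum P (f ` P)" unfolding set_sum_def by force
      qed
      show "q \<in> set_sum P (f ` P)" using fp pP sub_zero[OF Psub] unfolding set_sum_def by force
      show "q \<notin> P" by (rule qnP)
      fix z assume "z \<in> set_sum P (f ` P)"
      then obtain x y where xy: "x \<in> P" "y \<in> P" "z = x + f y" unfolding set_sum_def by blast
      have "z - sm (\<gamma> y) q = x + y - sm (\<gamma> y) p" unfolding xy f_def w_def sm_diff by simp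
      moreover have "x + y - sm (\<gamma> y) p \<in> P"
        using sub_diff[OF Psub sub_add[OF Psub xy(1,2)] sub_sm[OF Psub pP]] .
      ultimately show "\<exists>c. z - sm c q \<in> P" by metis
    qed
  next
    show "quot_dim_one sm (set_sum P (f ` P)) (f ` P)" unfolding quot_dim_one_def
    proof (intro conjI bexI[of _ p] ballI)
      show "f ` P \<subseteq> set_sum P (f ` P)" using sub_zero[OF Psub] unfolding set_sum_def by force
      have "0 \<in> f ` P" using f0 sub_zero[OF Psub] by (metis image_eqI)
      then show "p \<in> set_sum P (f ` P)" using pP unfolding set_sum_def by force
      show "p \<notin> f ` P"
      proof
        assume "p \<in> f ` P"
        then have "f p \<in> f ` f ` P" by blast
        then show False using fp qnP li_img_img[OF fl] by simp
      qed
      fix z assume "z \<in> set_sum P (f ` P)"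
      then obtain x y where xy: "x \<in> P" "y \<in> P" "z = x + f y" unfolding set_sum_def by blast
      define c where "c = \<gamma> x"
      have "\<gamma> x = \<gamma> (x - sm c p) + \<gamma> (sm c p)" using gadd[of "x - sm c p" "sm c p"] by simp
      then have gx: "\<gamma> (x - sm c p) = 0" using gsm[of c p] gp c_def by simp
      have fx: "f (x - sm c p) = x - sm c p" unfolding f_def gx by simp
      have "z - sm c p = f (x - sm c p + y)" unfolding xy li_add[OF fl] fx by simp
      moreover have "x - sm c p + y \<in> P"
        using sub_add[OF Psub sub_diff[OF Psub xy(1) sub_sm[OF Psub pP]] xy(2)] .
      ultimately show "\<exists>c. z - sm c p \<in> f ` P" by blast
    qed
  qed
  have nd: "\<not> distant (f ` P) Q"
  proof
    assume "distant (f ` P) Q"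
    then have "f ` P \<inter> Q = {0}" unfolding distant_def by blast
    moreover have "q \<in> f ` P" using fp pP by (metis image_eqI)
    ultimately have "q = 0" using qQ by blast
    then show False using basis_nz qB by blast
  qed
  have NoI: "\<not> P \<subseteq> lvs_span sm (Q \<union> F)" if F: "finite F" for F
  proof
    assume PS: "P \<subseteq> lvs_span sm (Q \<union> F)"
    define S where "S = (\<Union>x\<in>F. supp (coord x))"
    have "finite S" unfolding S_def using F coord unfolding fs_def by blast
    then obtain b where b: "b \<in> B1" "b \<notin> S" using inf1 by (meson finite_subset subsetI)
    define W where "W = {v. coord v b = 0}"
    have Wsub: "lvs_subspace sm W" unfolding lvs_subspace_def W_def
      by (simp add: coord_add coord_smult coord_zero)
    have "Q \<union> F \<subseteq> W"
    proof
      fix v assume "v \<in> Q \<union> F"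
      then show "v \<in> W"
      proof
        assume "v \<in> Q"
        then have "supp (coord v) \<subseteq> B2" using inQ by blast
        then show ?thesis using b(1) D unfolding W_def supp_def by blast
      next
        assume "v \<in> F"
        then show ?thesis using b(2) unfolding W_def S_def supp_def by blast
      qed
    qed
    then have "lvs_span sm (Q \<union> F) \<subseteq> W" using span_least[OF Wsub] by blast
    moreover have "b \<in> P" unfolding P_def using b(1) span_sup by blast
    ultimately have "coord b b = 0" using PS unfolding W_def by blast
    then show False using coord_basis[OF B1B[THEN subsetD, OF b(1)]] by simp
  qed
  show ?thesis by (rule final[OF PG QG dPQ fl adjP nd NoI])
qed

end

theorem mainTheorem5:
  fixes sm :: "'k::division_ring \<Rightarrow> 'v::ab_group_add \<Rightarrow> 'v"
  assumes "lvs sm"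
    and "\<not> lvs_fin_dim sm"
  shows "\<exists>\<phi>. bij_betw \<phi> (calG sm) (calG sm) \<and>
           (\<forall>X\<in>calG sm. \<forall>Y\<in>calG sm. adjacent sm X Y \<longleftrightarrow> adjacent sm (\<phi> X) (\<phi> Y)) \<and>
           (\<exists>P\<in>calG sm. \<exists>Q\<in>calG sm. distant P Q \<and> \<not> distant (\<phi> P) (\<phi> Q))"
proof -
  interpret lv sm using assms(1) by (simp add: lv_def)
  obtain B where iB: "indep B" and sB: "lvs_span sm B = UNIV" using basis_exists by blast
  interpret lvb sm B using assms(1) iB sB by (simp add: lvb_def lvb_axioms_def lv_def)
  have "infinite B" using assms(2) sB unfolding lvs_fin_dim_def by blast
  then show ?thesis by (rule construct)
qed

end
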